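(* For any $n\in\mathbb{N}$, the monoid $\mathrm{rps}_n$ has polynomial growth.
   Context: Let $\mathcal{A}_n=\{1<2<\cdots<n\}$. An rPS tableau is a finite (possibly empty) sequence of nonempty bottom-justified columns of boxes filled with positive integers, such that the entries of each column are weakly decreasing from top to bottom and the bottom entries of the columns form a strictly increasing sequence from left to right. Right insertion of a symbol $a$ into an rPS tableau $B$: if $a$ is strictly greater than every entry of the bottom row, append a new column consisting of $a$ at the right end; otherwise, let $z$ be the leftmost bottom-row entry with $z\geq a$ and put $a$ in a new box at the bottom of the column of $z$ (the previous entries of that column move up one box). For $w=w_1\cdots w_k$, $\mathfrak{R}_r(w)$ is obtained by starting with the empty tableau and right-inserting $w_1,\dots,w_k$ in order. The monoid $\mathrm{rps}_n$ is the quotient of the free monoid $\mathcal{A}_n^*$ by the congruence $u\equiv v\iff\mathfrak{R}_r(u)=\mathfrak{R}_r(v)$. For a monoid $M$ generated by a finite set $\Sigma$, the growth function $\gamma_M(N)$ is the number of elements of $M$ expressible as products of at most $N$ generators; $M$ has polynomial growth if $\gamma_M(N)$ is bounded above by $N^k$ for some $k$ (up to the usual equivalence of growth functions), a notion independent of the finite generating set. *)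

theory Defs
  imports Main
begin

text \<open>An rPS tableau is a list of columns (left to right); each column is a
list of entries read from BOTTOM to TOP (so the head is the bottom entry).\<close>

type_synonym rps_tableau = "nat list list"

fun rps_rinsert :: "nat \<Rightarrow> rps_tableau \<Rightarrow> rps_tableau" where
  "rps_rinsert a [] = [[a]]"
| "rps_rinsert a (c # cs) =
     (if a \<le> hd c then (a # c) # cs else c # rps_rinsert a cs)"

definition rps_R :: "nat list \<Rightarrow> rps_tableau" where
  "rps_R w = foldl (\<lambda>T a. rps_rinsert a T) [] w"

definition alph :: "nat \<Rightarrow> nat set" where
  "alph n = {1..n}"

definition rps_equiv :: "nat \<Rightarrow> nat list \<Rightarrow> nat list \<Rightarrow> bool" where
  "rps_equiv n u v \<longleftrightarrow> u \<in> lists (alph n) \<and> v \<in> lists (alph n) \<and> rps_R u = rps_R v"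

definition rps_class :: "nat \<Rightarrow> nat list \<Rightarrow> nat list set" where
  "rps_class n w = {v. rps_equiv n w v}"

definition rps_growth :: "nat \<Rightarrow> nat \<Rightarrow> nat" where
  "rps_growth n N = card (rps_class n ` {w \<in> lists (alph n). length w \<le> N})"

definition poly_growth :: "(nat \<Rightarrow> nat) \<Rightarrow> bool" where
  "poly_growth \<gamma> \<longleftrightarrow> (\<exists>C k::nat. \<forall>N\<ge>1. \<gamma> N \<le> C * N ^ k)"

end

theory Submission
  imports Defs "HOL-Library.FuncSet" "HOL-Library.Multiset"
begin

definition inv_t :: "nat \<Rightarrow> rps_tableau \<Rightarrow> bool" where
  "inv_t n T \<longleftrightarrow> (\<forall>c\<in>set T. c \<noteq> [] \<and> sorted c \<and> set c \<subseteq> {1..n}) \<and> sorted_wrt (<) (map hd T)"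

lemma heads_ins: "set (map hd (rps_rinsert a T)) \<subseteq> insert a (set (map hd T))"
  by (induction T) auto

lemma ins_inv: "inv_t n T \<Longrightarrow> a \<in> {1..n} \<Longrightarrow> inv_t n (rps_rinsert a T)"
proof (induction T)
  case Nil
  then show ?case by (simp add: inv_t_def)
next
  case (Cons c cs)
  have ic: "inv_t n cs" using Cons.prems by (simp add: inv_t_def)
  show ?case
  proof (cases "a \<le> hd c")
    case True
    have "sorted (a # c)" using Cons.prems True
      by (cases c) (auto simp: inv_t_def)
    moreover have "\<forall>x\<in>set cs. a < hd x" using Cons.prems True by (auto simp: inv_t_def)
    ultimately show ?thesis using Cons.prems True by (auto simp: inv_t_def)
  next
    case False
    have i2: "inv_t n (rps_rinsert a cs)" using Cons.IH[OF ic Cons.prems(2)] .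
    have "\<forall>x\<in>set (map hd (rps_rinsert a cs)). hd c < x"
      using heads_ins[of a cs] False Cons.prems(1) by (auto simp: inv_t_def)
    then show ?thesis using Cons.prems False i2 by (auto simp: inv_t_def)
  qed
qed

lemma ins_len: "sum_list (map length (rps_rinsert a T)) = Suc (sum_list (map length T))"
  by (induction T) auto

lemma R_props: "w \<in> lists (alph n) \<Longrightarrow> inv_t n (rps_R w) \<and> sum_list (map length (rps_R w)) = length w"
proof (induction w rule: rev_induct)
  case Nil
  then show ?case by (simp add: rps_R_def inv_t_def)
next
  case (snoc x xs)
  then show ?case using ins_inv ins_len by (auto simp: rps_R_def alph_def)
qed

lemma R_inv: "w \<in> lists (alph n) \<Longrightarrow> inv_t n (rps_R w)"
  using R_props by blast

lemma inv_len: "inv_t n T \<Longrightarrow> length T \<le> n"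
proof -
  assume a: "inv_t n T"
  have d: "distinct (map hd T)" using a by (simp add: inv_t_def strict_sorted_iff)
  have "set (map hd T) \<subseteq> {1..n}"
  proof
    fix x assume "x \<in> set (map hd T)"
    then obtain c where c: "c \<in> set T" "x = hd c" by auto
    then have "c \<noteq> []" "set c \<subseteq> {1..n}" using a by (auto simp: inv_t_def)
    then show "x \<in> {1..n}" using c hd_in_set by blast
  qed
  then have "card (set (map hd T)) \<le> n" using card_mono[of "{1..n}"] by fastforce
  then show ?thesis using distinct_card[OF d] by simp
qed

definition enc :: "nat \<Rightarrow> rps_tableau \<Rightarrow> nat \<times> (nat \<times> nat \<Rightarrow> nat)" where
  "enc n T = (length T, restrict (\<lambda>(i,j). if i < length T then count (mset (T!i)) j else 0) ({0..<n}\<times>{1..n}))"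

lemma enc_inj: "inj_on (enc n) {T. inv_t n T}"
proof (rule inj_onI)
  fix T1 T2 assume t1: "T1 \<in> {T. inv_t n T}" and t2: "T2 \<in> {T. inv_t n T}" and e: "enc n T1 = enc n T2"
  have l: "length T1 = length T2" using e by (simp add: enc_def)
  have ln: "length T1 \<le> n" using inv_len t1 by simp
  show "T1 = T2"
  proof (rule nth_equalityI[OF l])
    fix i assume i: "i < length T1"
    have c1: "T1 ! i \<in> set T1" "T2 ! i \<in> set T2" using i l by auto
    have s1: "sorted (T1!i)" "set (T1!i) \<subseteq> {1..n}" using t1 c1 by (auto simp: inv_t_def)
    have s2: "sorted (T2!i)" "set (T2!i) \<subseteq> {1..n}" using t2 c1 by (auto simp: inv_t_def)
    have "mset (T1!i) = mset (T2!i)"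
    proof (rule multiset_eqI)
      fix j
      show "count (mset (T1!i)) j = count (mset (T2!i)) j"
      proof (cases "j \<in> {1..n}")
        case True
        have "(i,j) \<in> {0..<n}\<times>{1..n}" using True i ln by auto
        have ee: "restrict (\<lambda>(i,j). if i < length T1 then count (mset (T1!i)) j else 0) ({0..<n}\<times>{1..n})
          = restrict (\<lambda>(i,j). if i < length T2 then count (mset (T2!i)) j else 0) ({0..<n}\<times>{1..n})"
          using e unfolding enc_def prod.inject by (elim conjE)
        have "restrict (\<lambda>(i,j). if i < length T1 then count (mset (T1!i)) j else 0) ({0..<n}\<times>{1..n}) (i,j)
          = restrict (\<lambda>(i,j). if i < length T2 then count (mset (T2!i)) j else 0) ({0..<n}\<times>{1..n}) (i,j)"
          using ee by simp
        then show ?thesis using True i l \<open>(i,j) \<in> _\<close> by simp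
      next
        case False
        then have "j \<notin> set (T1!i)" "j \<notin> set (T2!i)" using s1 s2 by auto
        then show ?thesis by (metis count_mset_0_iff)
      qed
    qed
    then show "T1 ! i = T2 ! i" using s1 s2 by (metis properties_for_sort)
  qed
qed

lemma card_image_dep:
  assumes "\<forall>x\<in>A. \<forall>y\<in>A. g x = g y \<longrightarrow> f x = f y" and "finite (g ` A)"
  shows "card (f ` A) \<le> card (g ` A)"
proof -
  have "f ` A = (\<lambda>b. f (inv_into A g b)) ` (g ` A)"
  proof
    show "f ` A \<subseteq> (\<lambda>b. f (inv_into A g b)) ` g ` A"
    proof
      fix y assume "y \<in> f ` A"
      then obtain x where x: "x \<in> A" "y = f x" by auto
      have "inv_into A g (g x) \<in> A" "g (inv_into A g (g x)) = g x"
        using x by (auto intro: inv_into_into f_inv_into_f)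
      then have "f (inv_into A g (g x)) = f x" using assms x by blast
      then show "y \<in> (\<lambda>b. f (inv_into A g b)) ` g ` A" using x by force
    qed
  next
    show "(\<lambda>b. f (inv_into A g b)) ` g ` A \<subseteq> f ` A"
      by (auto intro: inv_into_into)
  qed
  then show ?thesis using card_image_le assms(2) by metis
qed

theorem theorem4p3:
  fixes n :: nat
  shows "poly_growth (rps_growth n)"
  unfolding poly_growth_def
proof (intro exI allI impI)
  fix N :: nat assume N: "N \<ge> 1"
  define W where "W = {w \<in> lists (alph n). length w \<le> N}"
  define B where "B = {0..n} \<times> PiE ({0..<n}\<times>{1..n}) (\<lambda>_. {0..N})"
  have fB: "finite B" unfolding B_def by (intro finite_cartesian_product finite_PiE) auto
  have cB: "card B = (n+1) * (N+1)^(n*n)"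
    unfolding B_def by (simp add: card_cartesian_product card_PiE)
  have sub: "enc n ` rps_R ` W \<subseteq> B"
  proof
    fix z assume "z \<in> enc n ` rps_R ` W"
    then obtain w where w: "w \<in> W" "z = enc n (rps_R w)" by auto
    have p: "inv_t n (rps_R w)" "sum_list (map length (rps_R w)) = length w"
      using R_props w(1) by (auto simp: W_def)
    have cnt: "count (mset (rps_R w ! i)) j \<le> N" if "i < length (rps_R w)" for i j
    proof -
      have "count (mset (rps_R w ! i)) j \<le> length (rps_R w ! i)"
        by (metis count_le_size size_mset)
      also have "\<dots> \<le> sum_list (map length (rps_R w))"
        using that by (metis elem_le_sum_list length_map nth_map)
      finally show ?thesis using p(2) w(1) by (simp add: W_def)
    qed
    show "z \<in> B" using w(2) inv_len[OF p(1)] cnt unfolding B_def enc_def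
      by (auto simp: PiE_iff)
  qed
  have fR: "finite (rps_R ` W)"
  proof -
    have "finite (enc n ` rps_R ` W)" using finite_subset[OF sub fB] .
    moreover have "inj_on (enc n) (rps_R ` W)"
      using enc_inj by (rule inj_on_subset) (auto simp: W_def intro: R_inv)
    ultimately show ?thesis using finite_imageD by blast
  qed
  have "rps_growth n N = card (rps_class n ` W)" by (simp add: rps_growth_def W_def)
  also have "\<dots> \<le> card (rps_R ` W)"
    by (rule card_image_dep[OF _ fR]) (auto simp: rps_class_def rps_equiv_def W_def)
  also have "\<dots> = card (enc n ` rps_R ` W)"
    using enc_inj by (intro card_image[symmetric], rule inj_on_subset) (auto simp: W_def intro: R_inv)
  also have "\<dots> \<le> card B" using card_mono[OF fB sub] .
  also have "\<dots> = (n+1) * (N+1)^(n*n)" by (rule cB)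
  also have "\<dots> \<le> (n+1) * (2*N)^(n*n)" using N by (intro mult_le_mono2 power_mono) auto
  also have "\<dots> = ((n+1) * 2^(n*n)) * N^(n*n)" by (simp add: power_mult_distrib algebra_simps)
  finally show "rps_growth n N \<le> ((n+1) * 2^(n*n)) * N^(n*n)" .
qed

end
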